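(* Let $\mathfrak{M}=\{M^{(\alpha)}:\alpha>0\}$ be a non-quasianalytic weight matrix such that $\mu^{(\alpha)}\le\mu^{(\beta)}$ termwise whenever $\alpha\le\beta$, \[ \forall\alpha>0\ \exists\beta>0:\ \liminf_{k\to\infty}\frac{\mu^{(\beta)}_k}{k}\sum_{j\ge2k}\frac1{\mu^{(\alpha)}_j}>0, \] and \[ \forall\alpha>0\ \exists\beta>0\ \exists A\ge1\ \forall j\in\mathbb{N}:\ (\mu^{(\alpha)}_j)^2\le A\mu^{(\beta)}_{2j}. \] Then (i) $\forall\alpha>0\ \exists\beta>0:\ \liminf_{k\to\infty}\frac{\mu^{(\beta)}_k}{k}\sum_{j\ge k}\frac1{\mu^{(\alpha)}_j}>0$, and (ii) $\forall\alpha>0\ \exists\beta>0\ \exists A\ge1\ \forall j\in\mathbb{N}_{\ge1}:\ \sigma^{(\alpha)}_j\le A(S^{(\beta)}_j)^{1/j}$.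
   Context: A weight sequence is $M=(M_k)_{k\ge0}$ with $M_k=\mu_0\cdots\mu_k$, $1=\mu_0\le\mu_1\le\cdots$, $\mu_k\to\infty$; non-quasianalytic if $\sum1/\mu_k<\infty$; $\mu^{(\alpha)}_k=M^{(\alpha)}_k/M^{(\alpha)}_{k-1}$. A weight matrix is a family $\{M^{(\alpha)}:\alpha>0\}$ of weight sequences with $M^{(\alpha)}\le M^{(\beta)}$ for $\alpha\le\beta$; non-quasianalytic if all members are. The derived sequences: $S^{(\alpha)}_k=\sigma^{(\alpha)}_0\cdots\sigma^{(\alpha)}_k$ with $\sigma^{(\alpha)}_0=1$, $\sigma^{(\alpha)}_k=\tau^{(\alpha)}_1k/\tau^{(\alpha)}_k$ and $\tau^{(\alpha)}_k=k/\mu^{(\alpha)}_k+\sum_{\ell\ge k}1/\mu^{(\alpha)}_\ell$ for $k\ge1$. *)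

theory Defs
  imports "HOL-Analysis.Analysis"
begin

definition mu :: "(nat \<Rightarrow> real) \<Rightarrow> nat \<Rightarrow> real" where
  "mu M k = (if k = 0 then M 0 else M k / M (k - 1))"

definition weight_sequence :: "(nat \<Rightarrow> real) \<Rightarrow> bool" where
  "weight_sequence M \<longleftrightarrow>
     M 0 = 1 \<and> (\<forall>k. M k > 0) \<and> mono (mu M) \<and> filterlim (mu M) at_top sequentially"

definition non_quasianalytic :: "(nat \<Rightarrow> real) \<Rightarrow> bool" where
  "non_quasianalytic M \<longleftrightarrow> summable (\<lambda>k. 1 / mu M k)"

definition weight_matrix :: "(real \<Rightarrow> nat \<Rightarrow> real) \<Rightarrow> bool" where
  "weight_matrix M \<longleftrightarrow>
     (\<forall>\<alpha>>0. weight_sequence (M \<alpha>)) \<and>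
     (\<forall>\<alpha> \<beta>. 0 < \<alpha> \<longrightarrow> \<alpha> \<le> \<beta> \<longrightarrow> (\<forall>k. M \<alpha> k \<le> M \<beta> k))"

definition nq_weight_matrix :: "(real \<Rightarrow> nat \<Rightarrow> real) \<Rightarrow> bool" where
  "nq_weight_matrix M \<longleftrightarrow> weight_matrix M \<and> (\<forall>\<alpha>>0. non_quasianalytic (M \<alpha>))"

definition tau :: "(nat \<Rightarrow> real) \<Rightarrow> nat \<Rightarrow> real" where
  "tau M k = real k / mu M k + (\<Sum>l. 1 / mu M (l + k))"

definition sigma :: "(nat \<Rightarrow> real) \<Rightarrow> nat \<Rightarrow> real" where
  "sigma M k = (if k = 0 then 1 else tau M 1 * real k / tau M k)"

definition Sder :: "(nat \<Rightarrow> real) \<Rightarrow> nat \<Rightarrow> real" where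
  "Sder M k = (\<Prod>i\<in>{0..k}. sigma M i)"

end

theory Submission
  imports Defs
begin

definition good :: "(nat \<Rightarrow> real) \<Rightarrow> bool" where
  "good M \<longleftrightarrow> (\<forall>k. 1 \<le> mu M k) \<and> mono (mu M) \<and> summable (\<lambda>k. 1 / mu M k)"

definition TT :: "(nat \<Rightarrow> real) \<Rightarrow> nat \<Rightarrow> real" where
  "TT M k = (\<Sum>l. 1 / mu M (l + k))"

lemma good_from_nq:
  assumes "nq_weight_matrix M" "a > 0" shows "good (M a)"
proof -
  have ws: "weight_sequence (M a)" and s: "summable (\<lambda>k. 1 / mu (M a) k)"
    using assms unfolding nq_weight_matrix_def weight_matrix_def non_quasianalytic_def by auto
  have m: "mono (mu (M a))" and m0: "mu (M a) 0 = 1"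
    using ws unfolding weight_sequence_def mu_def by auto
  have "1 \<le> mu (M a) k" for k using m m0 by (metis le0 monoD)
  then show ?thesis using m s unfolding good_def by auto
qed

lemma good_pos: "good M \<Longrightarrow> 0 < mu M k"
  unfolding good_def by (metis less_le_trans zero_less_one)

lemma good_mono: "good M \<Longrightarrow> k \<le> m \<Longrightarrow> mu M k \<le> mu M m"
  unfolding good_def by (auto dest: monoD)

lemma good_summ: "good M \<Longrightarrow> summable (\<lambda>l. 1 / mu M (l + k))"
  unfolding good_def using summable_iff_shift[of "\<lambda>l. 1 / mu M l" k] by auto

lemma TT_nonneg: "good M \<Longrightarrow> 0 \<le> TT M k"
  unfolding TT_def using good_summ[of M k] good_pos[of M]
  by (intro suminf_nonneg) (auto intro: less_imp_le)

lemma TT_split: "good M \<Longrightarrow> TT M k = (\<Sum>l<n. 1 / mu M (l + k)) + TT M (n + k)"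
proof -
  assume g: "good M"
  have "TT M k = (\<Sum>l. 1 / mu M (l + n + k)) + (\<Sum>l<n. 1 / mu M (l + k))"
    unfolding TT_def using suminf_split_initial_segment[OF good_summ[OF g, of k], where k=n]
    by (simp add: add.assoc)
  then show ?thesis unfolding TT_def by (simp add: ac_simps)
qed

lemma TT_Suc: "good M \<Longrightarrow> TT M k = 1 / mu M k + TT M (Suc k)"
  using TT_split[of M k 1] by simp

lemma TT_antimono: "good M \<Longrightarrow> k \<le> m \<Longrightarrow> TT M m \<le> TT M k"
proof -
  assume g: "good M" and "k \<le> m"
  then obtain n where m: "m = n + k" by (metis le_add_diff_inverse2)
  have "0 \<le> (\<Sum>l<n. 1 / mu M (l + k))" using good_pos[OF g] by (intro sum_nonneg) (auto intro: less_imp_le)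
  then show ?thesis using TT_split[OF g, of k n] m by simp
qed

lemma tau_TT: "tau M k = real k / mu M k + TT M k"
  unfolding tau_def TT_def by simp

lemma tau_ge_TT: "good M \<Longrightarrow> TT M k \<le> tau M k"
  unfolding tau_TT using good_pos[of M k] by simp

lemma tau_ge_first: "good M \<Longrightarrow> real k / mu M k \<le> tau M k"
  unfolding tau_TT using TT_nonneg[of M k] by simp

lemma tau_pos: "good M \<Longrightarrow> 1 \<le> k \<Longrightarrow> 0 < tau M k"
  by (metis tau_ge_first good_pos divide_pos_pos of_nat_0_less_iff less_le_trans
      linorder_not_less less_one order.strict_trans2 le_less)

lemma tau_Suc_le: "good M \<Longrightarrow> tau M (Suc k) \<le> tau M k"
proof -
  assume g: "good M"
  have p: "0 < mu M k" using good_pos[OF g] .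
  have le: "mu M k \<le> mu M (Suc k)" using good_mono[OF g] by simp
  have "real (Suc k) / mu M (Suc k) \<le> real (Suc k) / mu M k"
    using p le by (intro divide_left_mono) auto
  then show ?thesis unfolding tau_TT using TT_Suc[OF g, of k]
    by (simp add: add_divide_distrib)
qed

lemma tau_antimono: "good M \<Longrightarrow> k \<le> m \<Longrightarrow> tau M m \<le> tau M k"
  using decseq_SucI[of "tau M"] tau_Suc_le[of M] unfolding decseq_def by blast

lemma TT_compare: "good Ma \<Longrightarrow> good Mb \<Longrightarrow> (\<forall>k. mu Ma k \<le> mu Mb k) \<Longrightarrow> TT Mb k \<le> TT Ma k"
  unfolding TT_def
  by (intro suminf_le good_summ allI) (auto intro!: divide_left_mono simp: good_pos mult_pos_pos)

lemma shift_lemma: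
  assumes ga: "good Ma" and gb: "good Mb" and gc: "good Mc"
    and ac: "\<forall>k. mu Ma k \<le> mu Mc k" and bc: "\<forall>k. mu Mb k \<le> mu Mc k"
    and c0: "0 < c0" and K: "1 \<le> K"
    and ev: "\<forall>k\<ge>K. c0 < mu Mb k / real k * TT Ma (2*k)"
    and k: "K \<le> k" and m: "m \<le> 2*k"
  shows "tau Mc k \<le> (2/c0+1) * tau Ma m"
proof -
  have kpos: "0 < real k" using K k by simp
  have pb: "0 < mu Mb k" using good_pos[OF gb] .
  have pc: "0 < mu Mc k" using good_pos[OF gc] .
  have "c0 < mu Mb k / real k * TT Ma (2*k)" using ev k by auto
  hence "c0 * (real k / mu Mb k) < (mu Mb k / real k * TT Ma (2*k)) * (real k / mu Mb k)"
    using kpos pb by (intro mult_strict_right_mono) auto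
  also have "\<dots> = TT Ma (2*k)" using kpos pb by (simp add: field_simps)
  finally have h1: "real k / mu Mb k \<le> TT Ma (2*k) / c0" using c0 by (simp add: field_simps)
  have h2: "real k / mu Mc k \<le> real k / mu Mb k"
    using bc pb pc kpos by (intro divide_left_mono) (auto intro: mult_pos_pos)
  have "(\<Sum>l<k. 1 / mu Mc (l + k)) \<le> (\<Sum>l<k. 1 / mu Mc k)"
    by (intro sum_mono divide_left_mono good_mono[OF gc]) (auto simp: pc good_pos[OF gc])
  also have "\<dots> = real k / mu Mc k" by simp
  finally have "TT Mc k \<le> real k / mu Mc k + TT Mc (k + k)" using TT_split[OF gc, of k k] by simp
  also have "TT Mc (k + k) \<le> TT Ma (2*k)" using TT_compare[OF ga gc ac] by (simp add: mult_2)
  finally have h3: "TT Mc k \<le> real k / mu Mc k + TT Ma (2*k)" by simp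
  have "tau Mc k \<le> 2 * (TT Ma (2*k) / c0) + TT Ma (2*k)"
    unfolding tau_TT using h1 h2 h3 by simp
  also have "\<dots> = (2/c0+1) * TT Ma (2*k)" by (simp add: field_simps)
  also have "\<dots> \<le> (2/c0+1) * tau Ma (2*k)"
    using tau_ge_TT[OF ga] c0 by (intro mult_left_mono) (auto intro: add_nonneg_nonneg)
  also have "\<dots> \<le> (2/c0+1) * tau Ma m"
    using tau_antimono[OF ga m] c0 by (intro mult_left_mono) (auto intro: add_nonneg_nonneg)
  finally show ?thesis .
qed

lemma sum_div2:
  fixes f :: "nat \<Rightarrow> real" and n :: nat
  shows "(\<Sum>l<2*n. f (l div 2)) = 2 * (\<Sum>m<n. f m)"
proof (induction n)
  case 0 then show ?case by simp
next
  case (Suc n)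
  have "2 * Suc n = Suc (Suc (2*n))" by simp
  then have "(\<Sum>l<2*Suc n. f (l div 2)) = (\<Sum>l<2*n. f (l div 2)) + f n + f n"
    by simp
  then show ?case using Suc by simp
qed

lemma square_lemma:
  assumes ga: "good Ma" and gb: "good Mb" and A: "0 < A"
    and sq: "\<forall>j. (mu Ma j)^2 \<le> A * mu Mb (2*j)" and i: "1 \<le> i"
  shows "tau Mb (2*i) \<le> 2*A * (tau Ma i)^2 / real i"
proof -
  let ?m = "mu Ma i"
  have pm: "0 < ?m" using good_pos[OF ga] .
  define h where "h m = (A / ?m) * (1 / mu Ma (m + i))" for m
  have hnn: "0 \<le> h m" for m unfolding h_def using A pm good_pos[OF ga, of "m+i"] by simp
  have hs: "summable h" unfolding h_def using good_summ[OF ga, of i] by (rule summable_mult)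
  have hsum: "suminf h = (A / ?m) * TT Ma i" unfolding h_def TT_def
    using good_summ[OF ga, of i] by (rule suminf_mult)
  have trm: "1 / mu Mb (l + 2*i) \<le> h (l div 2)" for l
  proof -
    let ?q = "l div 2 + i"
    have pq: "0 < mu Ma ?q" using good_pos[OF ga] .
    have "mu Mb (2 * ?q) \<le> mu Mb (l + 2*i)" by (intro good_mono[OF gb]) auto
    moreover have "(mu Ma ?q)^2 \<le> A * mu Mb (2 * ?q)" using sq by blast
    moreover have "?m * mu Ma ?q \<le> (mu Ma ?q)^2"
      using good_mono[OF ga, of i ?q] pq by (simp add: power2_eq_square mult_right_mono)
    ultimately have le: "?m * mu Ma ?q \<le> A * mu Mb (l + 2*i)"
      using A by (smt (verit) mult_left_mono)
    have "1 / mu Mb (l + 2*i) = A / (A * mu Mb (l + 2*i))" using A by simp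
    also have "\<dots> \<le> A / (?m * mu Ma ?q)"
      using le pm pq A good_pos[OF gb, of "l + 2*i"] by (intro divide_left_mono) (auto intro!: mult_pos_pos)
    also have "\<dots> = h (l div 2)" unfolding h_def by simp
    finally show ?thesis .
  qed
  have "TT Mb (2*i) \<le> 2 * suminf h"
    unfolding TT_def
  proof (rule suminf_le_const[OF good_summ[OF gb]])
    fix n
    have "(\<Sum>l<n. 1 / mu Mb (l + 2*i)) \<le> (\<Sum>l<n. h (l div 2))" by (intro sum_mono trm)
    also have "\<dots> \<le> (\<Sum>l<2*n. h (l div 2))" by (intro sum_mono2) (auto simp: hnn)
    also have "\<dots> = 2 * (\<Sum>m<n. h m)" by (rule sum_div2)
    also have "\<dots> \<le> 2 * suminf h" using sum_le_suminf[OF hs, of "{..<n}"] hnn by simp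
    finally show "(\<Sum>l<n. 1 / mu Mb (l + 2*i)) \<le> 2 * suminf h" .
  qed
  hence T: "TT Mb (2*i) \<le> 2 * A * TT Ma i / ?m" using hsum by simp
  have "?m^2 \<le> A * mu Mb (2*i)" using sq by blast
  hence "real (2*i) / mu Mb (2*i) \<le> real (2*i) * A / ?m^2"
  proof -
    have "real i * ?m^2 \<le> real i * (A * mu Mb (2*i))" using \<open>?m^2 \<le> A * mu Mb (2*i)\<close> by (intro mult_left_mono) auto
    then show ?thesis using pm A good_pos[OF gb, of "2*i"] by (simp add: field_simps)
  qed
  hence "tau Mb (2*i) \<le> 2 * A * real i / ?m^2 + 2 * A * TT Ma i / ?m"
    unfolding tau_TT using T by (simp add: mult_ac)
  also have "\<dots> = (2*A / ?m) * tau Ma i" unfolding tau_TT using pm by (simp add: field_simps power2_eq_square)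
  also have "\<dots> \<le> (2*A) * (tau Ma i / real i) * tau Ma i"
  proof -
    have "1 / ?m \<le> tau Ma i / real i" using tau_ge_first[OF ga, of i] i by (simp add: field_simps)
    then have "(2*A) * (1 / ?m) * tau Ma i \<le> (2*A) * (tau Ma i / real i) * tau Ma i"
      using A tau_pos[OF ga i] by (intro mult_right_mono mult_left_mono) auto
    then show ?thesis by simp
  qed
  also have "\<dots> = 2*A * (tau Ma i)^2 / real i" by (simp add: power2_eq_square)
  finally show ?thesis .
qed

lemma sigma_lower:
  assumes g: "good M" and h: "1 \<le> h" "h \<le> i"
  shows "tau M 1 * real h / tau M h \<le> sigma M i"
proof -
  have t1: "0 < tau M 1" using tau_pos[OF g] by simp
  have th: "0 < tau M h" using tau_pos[OF g h(1)] .
  have ti: "0 < tau M i" using tau_pos[OF g] h by simp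
  have "tau M i \<le> tau M h" using tau_antimono[OF g h(2)] .
  have "tau M 1 * real h / tau M h \<le> tau M 1 * real i / tau M h"
    using h t1 th by (intro divide_right_mono mult_left_mono) auto
  also have "\<dots> \<le> tau M 1 * real i / tau M i"
    using \<open>tau M i \<le> tau M h\<close> ti t1 by (intro divide_left_mono) auto
  finally show ?thesis using h unfolding sigma_def by simp
qed

lemma sigma_ge1: "good M \<Longrightarrow> 1 \<le> sigma M i"
proof (cases "i = 0")
  case True then show ?thesis unfolding sigma_def by simp
next
  case False
  assume g: "good M"
  have "1 = tau M 1 * real 1 / tau M 1" using tau_pos[OF g, of 1] by simp
  also have "\<dots> \<le> sigma M i" using sigma_lower[OF g, of 1 i] False by simp
  finally show ?thesis .
qed

lemma Sder_ge1: "good M \<Longrightarrow> 1 \<le> Sder M j"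
  unfolding Sder_def by (intro prod_ge_1 sigma_ge1)

lemma Sder_lower:
  assumes g: "good M" and h: "1 \<le> h" "h \<le> j"
  shows "(tau M 1 * real h / tau M h) ^ (Suc j - h) \<le> Sder M j"
proof -
  let ?X = "tau M 1 * real h / tau M h"
  have X0: "0 \<le> ?X" using tau_pos[OF g, of 1] tau_pos[OF g h(1)] by simp
  have split: "Sder M j = prod (sigma M) {0..<h} * prod (sigma M) {h..<Suc j}"
    unfolding Sder_def using prod.atLeastLessThan_concat[of 0 h "Suc j" "sigma M"] h
    by (simp add: atLeastLessThanSuc_atLeastAtMost)
  have p1: "1 \<le> prod (sigma M) {0..<h}" by (intro prod_ge_1 sigma_ge1[OF g])
  have "?X ^ (Suc j - h) = (\<Prod>i\<in>{h..<Suc j}. ?X)" by simp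
  also have "\<dots> \<le> prod (sigma M) {h..<Suc j}"
    using X0 sigma_lower[OF g h(1)] by (intro prod_mono) auto
  finally have p2: "?X ^ (Suc j - h) \<le> prod (sigma M) {h..<Suc j}" .
  have "0 \<le> ?X ^ (Suc j - h)" using X0 by simp
  then have "?X ^ (Suc j - h) * 1 \<le> prod (sigma M) {h..<Suc j} * prod (sigma M) {0..<h}"
    using p1 p2 by (intro mult_mono) auto
  then show ?thesis using split by (simp add: mult.commute)
qed

lemma liminf_pos:
  assumes "0 < liminf (\<lambda>k. ereal (f k))"
  shows "\<exists>c>0. \<exists>K\<ge>1. \<forall>k\<ge>K. c < f k"
proof -
  obtain z where z: "0 < ereal z" "ereal z < liminf (\<lambda>k. ereal (f k))"
    using ereal_dense2[OF assms] by blast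
  have "eventually (\<lambda>k. ereal z < ereal (f k)) sequentially" using less_LiminfD[OF z(2)] .
  then obtain N where N: "\<forall>k\<ge>N. z < f k" unfolding eventually_sequentially by auto
  show ?thesis using z(1) N by (intro exI[of _ z] conjI exI[of _ "max N 1"]) auto
qed

lemma root_le:
  assumes "0 < Y" "Y ^ j \<le> S" "1 \<le> j"
  shows "Y \<le> S powr (1 / real j)"
proof -
  have "Y = (Y ^ j) powr (1 / real j)"
  proof -
    have "(Y ^ j) powr (1 / real j) = (Y powr (real j)) powr (1 / real j)" using assms(1) by (simp add: powr_realpow)
    also have "\<dots> = Y powr (real j * (1 / real j))" by (rule powr_powr)
    also have "\<dots> = Y" using assms by simp
    finally show ?thesis by simp
  qed
  also have "\<dots> \<le> S powr (1 / real j)" using assms by (intro powr_mono2) auto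
  finally show ?thesis .
qed

lemma frac_cross: "0 < b \<Longrightarrow> 0 < d \<Longrightarrow> a * d \<le> c * b \<Longrightarrow> a / b \<le> c / (d::real)"
  by (simp add: divide_simps)

lemma final_ineq:
  fixes h i j :: nat
  assumes pos: "0 < t1a" "0 < t1b" "0 < tj" "0 < tbh" "0 < A2" "0 < C"
    and j: "1 \<le> j" "j \<le> 2*h" "j \<le> 8*i" "1 \<le> i"
    and tb: "tbh \<le> 2*A2*(C*tj)^2 / real i"
    and A: "32*A2*C^2*t1a^2/t1b + 1 \<le> A"
  shows "(t1a * real j / tj / A)^2 \<le> t1b * real h / tbh"
proof -
  have "0 \<le> 32*A2*C^2*t1a^2/t1b" using pos by simp
  hence A1: "1 \<le> A" using A by linarith
  have AA: "A \<le> A^2" using A1 by (simp add: power2_eq_square)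
  have hi: "real j ^ 2 \<le> 16 * (real h * real i)"
  proof -
    have "real j * real j \<le> (2 * real h) * (8 * real i)"
    proof (rule mult_mono)
      have "real j \<le> real (2*h)" using j(2) by (simp only: of_nat_le_iff)
      then show "real j \<le> 2 * real h" by simp
      have "real j \<le> real (8*i)" using j(3) by (simp only: of_nat_le_iff)
      then show "real j \<le> 8 * real i" by simp
    qed auto
    then show ?thesis by (simp add: power2_eq_square)
  qed
  have ip: "0 < real i" using j by simp
  have d0: "0 < 2*A2*(C*tj)^2 / real i" using pos ip by simp
  have r1: "t1b * real h / (2*A2*(C*tj)^2 / real i) \<le> t1b * real h / tbh"
    using pos tb d0 ip by (intro divide_left_mono) (auto intro!: mult_pos_pos divide_pos_pos)
  have r2: "t1b * real h / (2*A2*(C*tj)^2 / real i) = (t1b * real h * real i) / (2*A2*C^2*tj^2)"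
    by (simp add: power_mult_distrib)
  have r3: "(t1a * real j / tj / A)^2 = (t1a^2 * real j^2) / (A^2 * tj^2)"
    by (simp add: power_divide power_mult_distrib)
  have "32*A2*C^2*t1a^2/t1b \<le> A^2" using A AA by simp
  hence k1: "32*A2*C^2*t1a^2 \<le> A^2 * t1b" using pos by (simp add: pos_divide_le_eq)
  have "(t1a^2 * real j^2) * (2*A2*C^2) \<le> (t1a^2 * (16 * (real h * real i))) * (2*A2*C^2)"
    using hi pos by (intro mult_right_mono mult_left_mono) auto
  also have "\<dots> = (32*A2*C^2*t1a^2) * (real h * real i)" by simp
  also have "\<dots> \<le> (A^2 * t1b) * (real h * real i)" using k1 by (intro mult_right_mono) auto
  finally have k2: "(t1a^2 * real j^2) * (2*A2*C^2) \<le> (A^2 * t1b) * (real h * real i)" .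
  have k3: "(t1a^2 * real j^2) * (2*A2*C^2*tj^2) \<le> (t1b * real h * real i) * (A^2 * tj^2)"
  proof -
    have "((t1a^2 * real j^2) * (2*A2*C^2)) * tj^2 \<le> ((A^2 * t1b) * (real h * real i)) * tj^2"
      using k2 by (intro mult_right_mono) auto
    then show ?thesis by (simp add: mult_ac)
  qed
  have "(t1a^2 * real j^2) / (A^2 * tj^2) \<le> (t1b * real h * real i) / (2*A2*C^2*tj^2)"
    using pos A1 k3 by (intro frac_cross) auto
  then show ?thesis using r1 r2 r3 by linarith
qed


lemma step:
  fixes M :: "real \<Rightarrow> nat \<Rightarrow> real"
  assumes nq: "nq_weight_matrix M"
    and mm: "\<forall>\<alpha> \<beta>. 0 < \<alpha> \<longrightarrow> \<alpha> \<le> \<beta> \<longrightarrow> (\<forall>k. mu (M \<alpha>) k \<le> mu (M \<beta>) k)"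
    and cond1: "\<forall>\<alpha>>0. \<exists>\<beta>>0.
        liminf (\<lambda>k. ereal (mu (M \<beta>) k / real k * (\<Sum>j. 1 / mu (M \<alpha>) (j + 2 * k)))) > 0"
    and al: "0 < \<alpha>"
  shows "\<exists>a C K. 0 < a \<and> 0 < C \<and> 1 \<le> K \<and> (\<forall>k\<ge>K. \<forall>m\<le>2*k. tau (M a) k \<le> C * tau (M \<alpha>) m)"
proof -
  obtain \<beta> where b: "0 < \<beta>"
    and l: "0 < liminf (\<lambda>k. ereal (mu (M \<beta>) k / real k * (\<Sum>j. 1 / mu (M \<alpha>) (j + 2 * k))))"
    using cond1 al by blast
  obtain c0 K where c0: "0 < c0" "1 \<le> K"
    and ev: "\<forall>k\<ge>K. c0 < mu (M \<beta>) k / real k * (\<Sum>j. 1 / mu (M \<alpha>) (j + 2 * k))"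
    using liminf_pos[OF l] by blast
  define a where "a = max \<alpha> \<beta>"
  have a: "0 < a" "\<alpha> \<le> a" "\<beta> \<le> a" using al unfolding a_def by auto
  have ga: "good (M \<alpha>)" "good (M \<beta>)" "good (M a)" using good_from_nq[OF nq] al b a by auto
  have ev': "\<forall>k\<ge>K. c0 < mu (M \<beta>) k / real k * TT (M \<alpha>) (2*k)" using ev unfolding TT_def .
  have h1: "\<forall>k. mu (M \<alpha>) k \<le> mu (M a) k" using mm al a by blast
  have h2: "\<forall>k. mu (M \<beta>) k \<le> mu (M a) k" using mm b a by blast
  have "\<forall>k\<ge>K. \<forall>m\<le>2*k. tau (M a) k \<le> (2/c0+1) * tau (M \<alpha>) m"
    using shift_lemma[OF ga(1) ga(2) ga(3) h1 h2 c0 ev'] by blast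
  moreover have "0 < 2/c0+1" using c0 by (simp add: add_pos_pos)
  ultimately show ?thesis using a c0 by blast
qed

lemma step3:
  fixes M :: "real \<Rightarrow> nat \<Rightarrow> real"
  assumes nq: "nq_weight_matrix M"
    and mm: "\<forall>\<alpha> \<beta>. 0 < \<alpha> \<longrightarrow> \<alpha> \<le> \<beta> \<longrightarrow> (\<forall>k. mu (M \<alpha>) k \<le> mu (M \<beta>) k)"
    and cond1: "\<forall>\<alpha>>0. \<exists>\<beta>>0.
        liminf (\<lambda>k. ereal (mu (M \<beta>) k / real k * (\<Sum>j. 1 / mu (M \<alpha>) (j + 2 * k)))) > 0"
    and al: "0 < \<alpha>"
  shows "\<exists>a C K. 0 < a \<and> 0 < C \<and> 1 \<le> K \<and> (\<forall>k\<ge>K. \<forall>m\<le>8*k. tau (M a) k \<le> C * tau (M \<alpha>) m)"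
proof -
  note st = step[OF nq mm cond1]
  obtain a1 C1 K1 where s1: "0 < a1" "0 < C1" "1 \<le> K1" "\<forall>k\<ge>K1. \<forall>m\<le>2*k. tau (M a1) k \<le> C1 * tau (M \<alpha>) m"
    using st[OF al] by blast
  obtain a2 C2 K2 where s2: "0 < a2" "0 < C2" "1 \<le> K2" "\<forall>k\<ge>K2. \<forall>m\<le>2*k. tau (M a2) k \<le> C2 * tau (M a1) m"
    using st[OF s1(1)] by blast
  obtain a3 C3 K3 where s3: "0 < a3" "0 < C3" "1 \<le> K3" "\<forall>k\<ge>K3. \<forall>m\<le>2*k. tau (M a3) k \<le> C3 * tau (M a2) m"
    using st[OF s2(1)] by blast
  define K where "K = max K1 (max K2 K3)"
  have "\<forall>k\<ge>K. \<forall>m\<le>8*k. tau (M a3) k \<le> (C3*C2*C1) * tau (M \<alpha>) m"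
  proof (intro allI impI)
    fix k m assume k: "K \<le> k" and m: "m \<le> 8*k"
    have "tau (M a3) k \<le> C3 * tau (M a2) (2*k)" using s3(4) k unfolding K_def by auto
    also have "\<dots> \<le> C3 * (C2 * tau (M a1) (4*k))"
      using s2(4) k s3(2) unfolding K_def by (intro mult_left_mono) auto
    also have "\<dots> \<le> C3 * (C2 * (C1 * tau (M \<alpha>) m))"
      using s1(4) k m s3(2) s2(2) unfolding K_def by (intro mult_left_mono) auto
    finally show "tau (M a3) k \<le> (C3*C2*C1) * tau (M \<alpha>) m" by (simp add: mult_ac)
  qed
  moreover have "1 \<le> K" using s1 unfolding K_def by auto
  ultimately show ?thesis using s3(1) s1(2) s2(2) s3(2) by (intro exI[of _ a3] exI[of _ "C3*C2*C1"] exI[of _ K]) auto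
qed


theorem lemma4p7:
  fixes M :: "real \<Rightarrow> nat \<Rightarrow> real"
  assumes nq: "nq_weight_matrix M"
    and mu_mono: "\<And>\<alpha> \<beta>. 0 < \<alpha> \<Longrightarrow> \<alpha> \<le> \<beta> \<Longrightarrow> (\<forall>k. mu (M \<alpha>) k \<le> mu (M \<beta>) k)"
    and cond1: "\<forall>\<alpha>>0. \<exists>\<beta>>0.
        liminf (\<lambda>k. ereal (mu (M \<beta>) k / real k * (\<Sum>j. 1 / mu (M \<alpha>) (j + 2 * k)))) > 0"
    and cond2: "\<forall>\<alpha>>0. \<exists>\<beta>>0. \<exists>A\<ge>1. \<forall>j. (mu (M \<alpha>) j)\<^sup>2 \<le> A * mu (M \<beta>) (2 * j)"
  shows "(\<forall>\<alpha>>0. \<exists>\<beta>>0.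
            liminf (\<lambda>k. ereal (mu (M \<beta>) k / real k * (\<Sum>j. 1 / mu (M \<alpha>) (j + k)))) > 0)
       \<and> (\<forall>\<alpha>>0. \<exists>\<beta>>0. \<exists>A\<ge>1. \<forall>j\<ge>1.
            sigma (M \<alpha>) j \<le> A * (Sder (M \<beta>) j) powr (1 / real j))"
proof (intro conjI allI impI)
  fix \<alpha> :: real assume al: "0 < \<alpha>"
  obtain \<beta> where b: "0 < \<beta>"
    and l: "0 < liminf (\<lambda>k. ereal (mu (M \<beta>) k / real k * (\<Sum>j. 1 / mu (M \<alpha>) (j + 2 * k))))"
    using cond1 al by blast
  have ga: "good (M \<alpha>)" and gb: "good (M \<beta>)" using good_from_nq[OF nq] al b by auto
  have "liminf (\<lambda>k. ereal (mu (M \<beta>) k / real k * (\<Sum>j. 1 / mu (M \<alpha>) (j + 2 * k))))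
     \<le> liminf (\<lambda>k. ereal (mu (M \<beta>) k / real k * (\<Sum>j. 1 / mu (M \<alpha>) (j + k))))"
  proof (rule Liminf_mono, rule always_eventually, rule allI)
    fix k
    have "TT (M \<alpha>) (2*k) \<le> TT (M \<alpha>) k" by (rule TT_antimono[OF ga]) simp
    moreover have "0 \<le> mu (M \<beta>) k / real k" using good_pos[OF gb, of k] by simp
    ultimately have "mu (M \<beta>) k / real k * TT (M \<alpha>) (2*k) \<le> mu (M \<beta>) k / real k * TT (M \<alpha>) k"
      by (intro mult_left_mono)
    then show "ereal (mu (M \<beta>) k / real k * (\<Sum>j. 1 / mu (M \<alpha>) (j + 2 * k)))
       \<le> ereal (mu (M \<beta>) k / real k * (\<Sum>j. 1 / mu (M \<alpha>) (j + k)))"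
      unfolding TT_def by simp
  qed
  then show "\<exists>\<beta>>0. liminf (\<lambda>k. ereal (mu (M \<beta>) k / real k * (\<Sum>j. 1 / mu (M \<alpha>) (j + k)))) > 0"
    using b l by (intro exI[of _ \<beta>]) auto
next
  fix \<alpha> :: real assume al: "0 < \<alpha>"
  have mm: "\<forall>\<alpha> \<beta>. 0 < \<alpha> \<longrightarrow> \<alpha> \<le> \<beta> \<longrightarrow> (\<forall>k. mu (M \<alpha>) k \<le> mu (M \<beta>) k)"
    using mu_mono by blast
  obtain a C K where aCK: "0 < a" "0 < C" "1 \<le> K"
    and sh: "\<forall>k\<ge>K. \<forall>m\<le>8*k. tau (M a) k \<le> C * tau (M \<alpha>) m"
    using step3[OF nq mm cond1 al] by blast
  obtain b A2 where b: "0 < b" "1 \<le> A2" and sq: "\<forall>j. (mu (M a) j)\<^sup>2 \<le> A2 * mu (M b) (2 * j)"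
    using cond2 aCK(1) by blast
  have gal: "good (M \<alpha>)" and ga: "good (M a)" and gb: "good (M b)"
    using good_from_nq[OF nq] al aCK b by auto
  define J0 where "J0 = 4*K+2"
  define A where "A = 32*A2*C^2*(tau (M \<alpha>) 1)^2/tau (M b) 1 + 1 + (\<Sum>j'<J0. sigma (M \<alpha>) j')"
  have t1a: "0 < tau (M \<alpha>) 1" and t1b: "0 < tau (M b) 1" using tau_pos gal gb by auto
  have sp: "0 \<le> (\<Sum>j'<J0. sigma (M \<alpha>) j')" using sigma_ge1[OF gal] by (intro sum_nonneg) (auto intro: order_trans[OF zero_le_one])
  have A0: "32*A2*C^2*(tau (M \<alpha>) 1)^2/tau (M b) 1 + 1 \<le> A" unfolding A_def using sp by simp
  have "0 \<le> 32*A2*C^2*(tau (M \<alpha>) 1)^2/tau (M b) 1" using t1a t1b b by simp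
  hence A1: "1 \<le> A" using A0 by linarith
  have main: "sigma (M \<alpha>) j \<le> A * (Sder (M b) j) powr (1 / real j)" if j: "1 \<le> j" for j
  proof (cases "j < J0")
    case True
    have "sigma (M \<alpha>) j \<le> (\<Sum>j'<J0. sigma (M \<alpha>) j')"
      using True sigma_ge1[OF gal] by (intro member_le_sum) (auto intro: order_trans[OF zero_le_one])
    also have "\<dots> \<le> A" unfolding A_def using t1a t1b b by simp
    also have "\<dots> \<le> A * (Sder (M b) j) powr (1 / real j)"
      using A1 ge_one_powr_ge_zero[OF Sder_ge1[OF gb, of j], of "1 / real j"] by simp
    finally show ?thesis .
  next
    case False
    define h where "h = j div 2 + 1"
    define i where "i = h div 2"
    have idx: "1 \<le> i" "K \<le> i" "2*i \<le> h" "h \<le> j" "1 \<le> h" "j \<le> 2*h" "j \<le> 8*i"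
      using False j unfolding h_def i_def J0_def by auto
    have tj: "0 < tau (M \<alpha>) j" using tau_pos[OF gal j] .
    have th: "0 < tau (M b) h" using tau_pos[OF gb idx(5)] .
    have "tau (M b) h \<le> tau (M b) (2*i)" using tau_antimono[OF gb idx(3)] .
    also have "\<dots> \<le> 2*A2*(tau (M a) i)^2 / real i"
      using square_lemma[OF ga gb _ sq idx(1)] b by simp
    also have "\<dots> \<le> 2*A2*(C * tau (M \<alpha>) j)^2 / real i"
    proof -
      have "tau (M a) i \<le> C * tau (M \<alpha>) j" using sh idx by blast
      hence "(tau (M a) i)^2 \<le> (C * tau (M \<alpha>) j)^2"
        using tau_pos[OF ga idx(1)] by (intro power_mono) auto
      then show ?thesis using b by (intro divide_right_mono mult_left_mono) auto
    qed
    finally have tb: "tau (M b) h \<le> 2*A2*(C * tau (M \<alpha>) j)^2 / real i" .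
    define X where "X = tau (M b) 1 * real h / tau (M b) h"
    define Y where "Y = sigma (M \<alpha>) j / A"
    have sj: "sigma (M \<alpha>) j = tau (M \<alpha>) 1 * real j / tau (M \<alpha>) j" using j unfolding sigma_def by simp
    have YX: "Y^2 \<le> X" unfolding X_def Y_def sj
      using final_ineq[OF t1a t1b tj th _ aCK(2) j idx(6) idx(7) idx(1) tb A0] b by simp
    have Y0: "0 < Y" unfolding Y_def using sigma_ge1[OF gal, of j] A1 by simp
    have X1: "1 \<le> X"
    proof -
      have "tau (M b) h \<le> tau (M b) 1" using tau_antimono[OF gb idx(5)] .
      also have "\<dots> \<le> tau (M b) 1 * real h" using t1b idx(5) by simp
      finally show ?thesis unfolding X_def using th by simp
    qed
    have YXn: "Y^j \<le> X^(Suc j - h)"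
    proof (cases "Y \<le> 1")
      case True
      then have "Y^j \<le> 1" using Y0 by (simp add: power_le_one)
      also have "1 \<le> X^(Suc j - h)" using X1 by simp
      finally show ?thesis .
    next
      case False
      have "Y^j \<le> Y^(2*(Suc j - h))" using False idx unfolding h_def by (intro power_increasing) auto
      also have "\<dots> = (Y^2)^(Suc j - h)" by (simp add: power_mult)
      also have "\<dots> \<le> X^(Suc j - h)" using YX by (intro power_mono) auto
      finally show ?thesis .
    qed
    have "Y^j \<le> Sder (M b) j" using YXn Sder_lower[OF gb idx(5) idx(4)] unfolding X_def by simp
    hence "Y \<le> Sder (M b) j powr (1 / real j)" using root_le Y0 j by blast
    then show ?thesis unfolding Y_def using A1 by (simp add: divide_le_eq mult.commute)
  qed
  show "\<exists>\<beta>>0. \<exists>A\<ge>1. \<forall>j\<ge>1. sigma (M \<alpha>) j \<le> A * (Sder (M \<beta>) j) powr (1 / real j)"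
    using b A1 main by blast
qed

end
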